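(* For any lattice $L\subseteq\mathbb{R}^m$, if $C$ is a lattice code in $\mathbb{R}^m/L$, then $|C|\in N(L):=\{\|z\|_2^m:z\in\overline{L}\setminus\{0\}\}$.
   Context: A lattice is a discrete full-rank subgroup of $\mathbb{R}^m$; $\ell(L)$ is the smallest Euclidean norm of a nonzero vector of $L$ and $\overline{L}:=\ell(L)^{-1}\cdot L$. $\operatorname{CO}(m):=\{cQ:c>0,Q\in\operatorname{O}(m)\}$. A lattice code in $\mathbb{R}^m/L$ is a set $(TL)/L$ where $T\in\operatorname{CO}(m)$ is such that $L\subseteq TL$. *)

theory Defs
  imports "HOL-Analysis.Analysis"
begin

definition is_lattice :: "(real^'m) set \<Rightarrow> bool" where
  "is_lattice L \<longleftrightarrow>
     0 \<in> L \<and> (\<forall>x\<in>L. \<forall>y\<in>L. x + y \<in> L) \<and> (\<forall>x\<in>L. - x \<in> L) \<and>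
     (\<forall>x\<in>L. \<exists>e>0. \<forall>y\<in>L. dist y x < e \<longrightarrow> y = x) \<and>
     span L = UNIV"

definition min_norm :: "(real^'m) set \<Rightarrow> real" where
  "min_norm L = Inf {norm x | x. x \<in> L \<and> x \<noteq> 0}"

definition normalized_lattice :: "(real^'m) set \<Rightarrow> (real^'m) set" where
  "normalized_lattice L = (\<lambda>x. inverse (min_norm L) *\<^sub>R x) ` L"

definition CO :: "((real^'m) \<Rightarrow> (real^'m)) set" where
  "CO = {T. \<exists>c Q. c > 0 \<and> orthogonal_transformation Q \<and> T = (\<lambda>x. c *\<^sub>R Q x)}"

definition quotient_set :: "(real^'m) set \<Rightarrow> (real^'m) set \<Rightarrow> (real^'m) set set" where
  "quotient_set M L = (\<lambda>x. (\<lambda>y. x + y) ` L) ` M"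

definition is_lattice_code :: "(real^'m) set \<Rightarrow> (real^'m) set set \<Rightarrow> bool" where
  "is_lattice_code L C \<longleftrightarrow>
     (\<exists>T \<in> CO. L \<subseteq> T ` L \<and> C = quotient_set (T ` L) L)"

definition N_set :: "(real^'m) set \<Rightarrow> real set" where
  "N_set L = {norm z ^ CARD('m) | z. z \<in> normalized_lattice L \<and> z \<noteq> 0}"

end

theory Submission
  imports Defs
begin

lemma fd_bij:
  fixes \<Lambda> \<Gamma> F :: "'a::ab_group_add set"
  assumes Ldiff: "\<And>a b. a\<in>\<Lambda> \<Longrightarrow> b\<in>\<Lambda> \<Longrightarrow> a - b \<in> \<Lambda>"
   and GL: "\<Gamma> \<subseteq> \<Lambda>" and G0: "0\<in>\<Gamma>" and Gadd: "\<And>a b. a\<in>\<Gamma> \<Longrightarrow> b\<in>\<Gamma> \<Longrightarrow> a + b \<in> \<Gamma>"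
   and Gneg: "\<And>a. a\<in>\<Gamma> \<Longrightarrow> -a\<in>\<Gamma>"
   and fd: "\<And>z. \<exists>!g. g \<in> \<Gamma> \<and> z - g \<in> F"
  shows "bij_betw (\<lambda>l. (+) l ` \<Gamma>) {l\<in>\<Lambda>. l - x \<in> F} ((\<lambda>l. (+) l ` \<Gamma>) ` \<Lambda>)"
proof (rule bij_betw_imageI)
  show "inj_on (\<lambda>l. (+) l ` \<Gamma>) {l \<in> \<Lambda>. l - x \<in> F}"
  proof (rule inj_onI)
    fix l1 l2 assume l1: "l1 \<in> {l \<in> \<Lambda>. l - x \<in> F}" and l2: "l2 \<in> {l \<in> \<Lambda>. l - x \<in> F}"
      and eq: "(+) l1 ` \<Gamma> = (+) l2 ` \<Gamma>"
    have "l2 \<in> (+) l2 ` \<Gamma>" using G0 by force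
    then obtain g where g: "g \<in> \<Gamma>" "l2 = l1 + g" using eq by auto
    have a: "l2 - x - 0 \<in> F" using l2 by simp
    have b: "l2 - x - g \<in> F" using l1 g by (simp add: algebra_simps)
    have "g = 0" using fd[of "l2 - x"] a b g G0 by blast
    then show "l1 = l2" using g by simp
  qed
  show "(\<lambda>l. (+) l ` \<Gamma>) ` {l \<in> \<Lambda>. l - x \<in> F} = (\<lambda>l. (+) l ` \<Gamma>) ` \<Lambda>"
  proof
    show "(\<lambda>l. (+) l ` \<Gamma>) ` {l \<in> \<Lambda>. l - x \<in> F} \<subseteq> (\<lambda>l. (+) l ` \<Gamma>) ` \<Lambda>" by auto
    show "(\<lambda>l. (+) l ` \<Gamma>) ` \<Lambda> \<subseteq> (\<lambda>l. (+) l ` \<Gamma>) ` {l \<in> \<Lambda>. l - x \<in> F}"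
    proof
      fix c assume "c \<in> (\<lambda>l. (+) l ` \<Gamma>) ` \<Lambda>"
      then obtain l where l: "l \<in> \<Lambda>" "c = (+) l ` \<Gamma>" by auto
      obtain g where g: "g \<in> \<Gamma>" "l - x - g \<in> F" using fd[of "l - x"] by blast
      have l': "l - g \<in> \<Lambda>" using Ldiff l g GL by auto
      have "(+) (l - g) ` \<Gamma> = (+) l ` \<Gamma>"
      proof
        show "(+) (l - g) ` \<Gamma> \<subseteq> (+) l ` \<Gamma>"
        proof
          fix y assume "y \<in> (+) (l - g) ` \<Gamma>"
          then obtain h where h: "h \<in> \<Gamma>" "y = l - g + h" by auto
          have "h + - g \<in> \<Gamma>" using Gadd[OF h(1) Gneg[OF g(1)]] .
          moreover have "y = l + (h + - g)" using h by simp
          ultimately show "y \<in> (+) l ` \<Gamma>" by blast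
        qed
        show "(+) l ` \<Gamma> \<subseteq> (+) (l - g) ` \<Gamma>"
        proof
          fix y assume "y \<in> (+) l ` \<Gamma>"
          then obtain h where h: "h \<in> \<Gamma>" "y = l + h" by auto
          have "h + g \<in> \<Gamma>" using Gadd h g by auto
          moreover have "y = (l - g) + (h + g)" using h by simp
          ultimately show "y \<in> (+) (l - g) ` \<Gamma>" by blast
        qed
      qed
      moreover have "l - g - x \<in> F" using g by (simp add: algebra_simps)
      ultimately show "c \<in> (\<lambda>l. (+) l ` \<Gamma>) ` {l \<in> \<Lambda>. l - x \<in> F}" using l l'
        by (intro image_eqI[of _ _ "l - g"]) auto
    qed
  qed
qed

lemma fd_card:
  fixes \<Lambda> \<Gamma> F :: "'a::ab_group_add set"
  assumes Ldiff: "\<And>a b. a\<in>\<Lambda> \<Longrightarrow> b\<in>\<Lambda> \<Longrightarrow> a - b \<in> \<Lambda>"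
   and GL: "\<Gamma> \<subseteq> \<Lambda>" and G0: "0\<in>\<Gamma>" and Gadd: "\<And>a b. a\<in>\<Gamma> \<Longrightarrow> b\<in>\<Gamma> \<Longrightarrow> a + b \<in> \<Gamma>"
   and Gneg: "\<And>a. a\<in>\<Gamma> \<Longrightarrow> -a\<in>\<Gamma>"
   and fd: "\<And>z. \<exists>!g. g \<in> \<Gamma> \<and> z - g \<in> F"
   and fin: "finite (\<Lambda> \<inter> F)"
  shows "finite {l\<in>\<Lambda>. l - x \<in> F} \<and> card {l\<in>\<Lambda>. l - x \<in> F} = card (\<Lambda> \<inter> F)"
proof -
  note b1 = fd_bij[OF assms(1-6), of x] and b0 = fd_bij[OF assms(1-6), of 0]
  have e: "{l\<in>\<Lambda>. l - 0 \<in> F} = \<Lambda> \<inter> F" by auto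
  show ?thesis using bij_betw_finite[OF b1] bij_betw_finite[OF b0] bij_betw_same_card[OF b1]
     bij_betw_same_card[OF b0] fin unfolding e by simp
qed

lemma fd_integral:
  fixes \<Lambda> \<Gamma> F A :: "'a::euclidean_space set"
  assumes Ldiff: "\<And>a b. a\<in>\<Lambda> \<Longrightarrow> b\<in>\<Lambda> \<Longrightarrow> a - b \<in> \<Lambda>"
   and GL: "\<Gamma> \<subseteq> \<Lambda>" and G0: "0\<in>\<Gamma>" and Gadd: "\<And>a b. a\<in>\<Gamma> \<Longrightarrow> b\<in>\<Gamma> \<Longrightarrow> a + b \<in> \<Gamma>"
   and Gneg: "\<And>a. a\<in>\<Gamma> \<Longrightarrow> -a\<in>\<Gamma>"
   and fd: "\<And>z. \<exists>!g. g \<in> \<Gamma> \<and> z - g \<in> F"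
   and fin: "finite (\<Lambda> \<inter> F)"
   and cL: "countable \<Lambda>"
   and [measurable]: "F \<in> sets borel" "A \<in> sets borel"
  shows "(\<integral>\<^sup>+l. emeasure lborel (A \<inter> {x. l - x \<in> F}) \<partial>count_space \<Lambda>)
         = of_nat (card (\<Lambda> \<inter> F)) * emeasure lborel A"
proof -
  note cnt = fd_card[OF assms(1-7)]
  have s1: "emeasure lborel (A \<inter> {x. l - x \<in> F}) = (\<integral>\<^sup>+x. indicator A x * indicator F (l - x) \<partial>lborel)" for l
  proof -
    have "{x. l - x \<in> F} = (\<lambda>x. l - x) -` F \<inter> space lborel" by auto
    also have "\<dots> \<in> sets lborel" by measurable
    finally have m: "A \<inter> {x. l - x \<in> F} \<in> sets lborel" by simp
    have "emeasure lborel (A \<inter> {x. l - x \<in> F}) = (\<integral>\<^sup>+x. indicator (A \<inter> {x. l - x \<in> F}) x \<partial>lborel)"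
      using m by simp
    also have "\<dots> = (\<integral>\<^sup>+x. indicator A x * indicator F (l - x) \<partial>lborel)"
      by (intro nn_integral_cong) (auto simp: indicator_def)
    finally show ?thesis .
  qed
  have s3: "(\<integral>\<^sup>+l. indicator A x * indicator F (l - x) \<partial>count_space \<Lambda>) = indicator A x * of_nat (card (\<Lambda> \<inter> F))" for x
  proof -
    have "(\<integral>\<^sup>+l. indicator A x * indicator F (l - x) \<partial>count_space \<Lambda>) = indicator A x * (\<integral>\<^sup>+l. indicator F (l - x) \<partial>count_space \<Lambda>)"
      by (rule nn_integral_cmult) simp
    also have "(\<integral>\<^sup>+l. indicator F (l - x) \<partial>count_space \<Lambda>) = (\<integral>\<^sup>+l. indicator {l\<in>\<Lambda>. l - x \<in> F} l \<partial>count_space \<Lambda>)"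
      by (intro nn_integral_cong) (auto simp: indicator_def)
    also have "\<dots> = emeasure (count_space \<Lambda>) {l\<in>\<Lambda>. l - x \<in> F}"
      by (intro nn_integral_indicator) auto
    also have "\<dots> = of_nat (card (\<Lambda> \<inter> F))"
      using cnt[of x] by (subst emeasure_count_space_finite) auto
    finally show ?thesis .
  qed
  have "(\<integral>\<^sup>+l. emeasure lborel (A \<inter> {x. l - x \<in> F}) \<partial>count_space \<Lambda>)
      = (\<integral>\<^sup>+l. \<integral>\<^sup>+x. indicator A x * indicator F (l - x) \<partial>lborel \<partial>count_space \<Lambda>)"
    by (simp add: s1)
  also have "\<dots> = (\<integral>\<^sup>+x. \<integral>\<^sup>+l. indicator A x * indicator F (l - x) \<partial>count_space \<Lambda> \<partial>lborel)"
    by (rule nn_integral_count_space_nn_integral[symmetric]) (use cL in auto)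
  also have "\<dots> = (\<integral>\<^sup>+x. indicator A x * of_nat (card (\<Lambda> \<inter> F)) \<partial>lborel)"
    by (simp add: s3)
  also have "\<dots> = of_nat (card (\<Lambda> \<inter> F)) * emeasure lborel A"
    by (simp add: nn_integral_multc mult.commute)
  finally show ?thesis .
qed

lemma refl_measure:
  fixes F :: "'a::euclidean_space set"
  assumes [measurable]: "F \<in> sets borel"
  shows "emeasure lborel {x. l - x \<in> F} = emeasure lborel F"
proof -
  have "lborel = density (distr lborel borel (\<lambda>x. l + (-1) *\<^sub>R x)) (\<lambda>_. \<bar>-1::real\<bar>^DIM('a))"
    by (rule lborel_affine) simp
  then have d: "(lborel :: 'a measure) = distr lborel borel (\<lambda>x. l - x)"
    by (simp add: density_1)
  have "emeasure lborel F = emeasure (distr lborel borel (\<lambda>x. l - x)) F"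
    by (rule arg_cong[where f="\<lambda>M. emeasure M F", OF d])
  also have "\<dots> = emeasure lborel ((\<lambda>x. l - x) -` F \<inter> space lborel)"
    by (rule emeasure_distr) auto
  also have "(\<lambda>x. l - x) -` F \<inter> space lborel = {x. l - x \<in> F}" by auto
  finally show ?thesis by simp
qed

lemma count_int:
  fixes S :: "'a set"
  assumes "finite (\<Lambda> \<inter> S)"
  shows "(\<integral>\<^sup>+l. indicator S l * c \<partial>count_space \<Lambda>) = of_nat (card (\<Lambda> \<inter> S)) * c"
proof -
  have "(\<integral>\<^sup>+l. indicator S l * c \<partial>count_space \<Lambda>) = (\<integral>\<^sup>+l. indicator (\<Lambda> \<inter> S) l \<partial>count_space \<Lambda>) * c"
    by (subst nn_integral_multc[symmetric]) (auto intro!: nn_integral_cong simp: indicator_def)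
  also have "\<dots> = of_nat (card (\<Lambda> \<inter> S)) * c"
    using assms by (subst nn_integral_indicator) auto
  finally show ?thesis .
qed

lemma fd_sandwich:
  fixes \<Lambda> \<Gamma> F :: "'a::euclidean_space set"
  assumes Ldiff: "\<And>a b. a\<in>\<Lambda> \<Longrightarrow> b\<in>\<Lambda> \<Longrightarrow> a - b \<in> \<Lambda>"
   and GL: "\<Gamma> \<subseteq> \<Lambda>" and G0: "0\<in>\<Gamma>" and Gadd: "\<And>a b. a\<in>\<Gamma> \<Longrightarrow> b\<in>\<Gamma> \<Longrightarrow> a + b \<in> \<Gamma>"
   and Gneg: "\<And>a. a\<in>\<Gamma> \<Longrightarrow> -a\<in>\<Gamma>"
   and fd: "\<And>z. \<exists>!g. g \<in> \<Gamma> \<and> z - g \<in> F"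
   and fin: "finite (\<Lambda> \<inter> F)"
   and cL: "countable \<Lambda>"
   and Fm[measurable]: "F \<in> sets borel"
   and Fd: "F \<subseteq> cball 0 d"
   and finb: "\<And>r. finite (\<Lambda> \<inter> cball 0 r)"
  shows "real (card (\<Lambda> \<inter> cball 0 (R - d))) * measure lborel F \<le> real (card (\<Lambda> \<inter> F)) * measure lborel (cball (0::'a) R)"
    and "real (card (\<Lambda> \<inter> F)) * measure lborel (cball (0::'a) R) \<le> real (card (\<Lambda> \<inter> cball 0 (R + d))) * measure lborel F"
proof -
  have I: "(\<integral>\<^sup>+l. emeasure lborel (cball 0 R \<inter> {x. l - x \<in> F}) \<partial>count_space \<Lambda>)
         = of_nat (card (\<Lambda> \<inter> F)) * emeasure lborel (cball (0::'a) R)"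
    by (rule fd_integral[OF assms(1-8) Fm]) auto
  have Ffin: "emeasure lborel F < \<infinity>"
    by (rule emeasure_bounded_finite) (rule bounded_subset[OF bounded_cball Fd])
  have eF: "emeasure lborel F = ennreal (measure lborel F)"
    using Ffin by (simp add: emeasure_eq_ennreal_measure)
  have eB: "emeasure lborel (cball (0::'a) R) = ennreal (measure lborel (cball (0::'a) R))"
    by (rule emeasure_eq_ennreal_measure) (use emeasure_bounded_finite[OF bounded_cball, of "0::'a" R] in auto)
  have lo: "indicator (cball 0 (R - d)) l * emeasure lborel F \<le> emeasure lborel (cball 0 R \<inter> {x. l - x \<in> F})" for l
  proof (cases "l \<in> cball 0 (R - d)")
    case True
    have "{x. l - x \<in> F} \<subseteq> cball 0 R"
    proof
      fix x assume "x \<in> {x. l - x \<in> F}"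
      then have "norm (l - x) \<le> d" using Fd by auto
      moreover have "norm l \<le> R - d" using True by auto
      moreover have "norm x \<le> norm l + norm (l - x)" using norm_triangle_ineq4[of l "l - x"] by simp
      ultimately show "x \<in> cball 0 R" by auto
    qed
    then have "cball 0 R \<inter> {x. l - x \<in> F} = {x. l - x \<in> F}" by auto
    then show ?thesis using True by (simp add: refl_measure)
  qed simp
  have up: "emeasure lborel (cball 0 R \<inter> {x. l - x \<in> F}) \<le> indicator (cball 0 (R + d)) l * emeasure lborel F" for l
  proof (cases "l \<in> cball 0 (R + d)")
    case True
    have "emeasure lborel (cball 0 R \<inter> {x. l - x \<in> F}) \<le> emeasure lborel {x. l - x \<in> F}"
      by (rule emeasure_mono) auto
    then show ?thesis using True by (simp add: refl_measure)
  next
    case False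
    have "cball 0 R \<inter> {x. l - x \<in> F} = {}"
    proof (rule ccontr)
      assume "cball 0 R \<inter> {x. l - x \<in> F} \<noteq> {}"
      then obtain x where x: "norm x \<le> R" "l - x \<in> F" by auto
      then have "norm (l - x) \<le> d" using Fd by auto
      moreover have "norm l \<le> norm x + norm (l - x)" using norm_triangle_ineq[of x "l - x"] by simp
      ultimately show False using False x by auto
    qed
    then show ?thesis by simp
  qed
  have "of_nat (card (\<Lambda> \<inter> cball 0 (R - d))) * emeasure lborel F
     = (\<integral>\<^sup>+l. indicator (cball 0 (R - d)) l * emeasure lborel F \<partial>count_space \<Lambda>)"
    by (rule count_int[symmetric]) (rule finb)
  also have "\<dots> \<le> of_nat (card (\<Lambda> \<inter> F)) * emeasure lborel (cball (0::'a) R)"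
    unfolding I[symmetric] by (rule nn_integral_mono) (rule lo)
  finally have A: "of_nat (card (\<Lambda> \<inter> cball 0 (R - d))) * emeasure lborel F \<le> of_nat (card (\<Lambda> \<inter> F)) * emeasure lborel (cball (0::'a) R)" .
  have "of_nat (card (\<Lambda> \<inter> F)) * emeasure lborel (cball (0::'a) R)
     \<le> (\<integral>\<^sup>+l. indicator (cball 0 (R + d)) l * emeasure lborel F \<partial>count_space \<Lambda>)"
    unfolding I[symmetric] by (rule nn_integral_mono) (rule up)
  also have "\<dots> = of_nat (card (\<Lambda> \<inter> cball 0 (R + d))) * emeasure lborel F"
    by (rule count_int) (rule finb)
  finally have B: "of_nat (card (\<Lambda> \<inter> F)) * emeasure lborel (cball (0::'a) R) \<le> of_nat (card (\<Lambda> \<inter> cball 0 (R + d))) * emeasure lborel F" .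
  show "real (card (\<Lambda> \<inter> cball 0 (R - d))) * measure lborel F \<le> real (card (\<Lambda> \<inter> F)) * measure lborel (cball (0::'a) R)"
    using A unfolding eF eB by (simp add: ennreal_of_nat_eq_real_of_nat ennreal_mult''[symmetric] ennreal_le_iff)
  show "real (card (\<Lambda> \<inter> F)) * measure lborel (cball (0::'a) R) \<le> real (card (\<Lambda> \<inter> cball 0 (R + d))) * measure lborel F"
    using B unfolding eF eB by (simp add: ennreal_of_nat_eq_real_of_nat ennreal_mult''[symmetric] ennreal_le_iff)
qed

lemma grp_int_mult:
  fixes \<Lambda> :: "'a::real_vector set"
  assumes "0 \<in> \<Lambda>" "\<And>a b. a\<in>\<Lambda> \<Longrightarrow> b\<in>\<Lambda> \<Longrightarrow> a + b \<in> \<Lambda>" "\<And>a. a\<in>\<Lambda> \<Longrightarrow> -a \<in> \<Lambda>"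
    and v: "v \<in> \<Lambda>" and k: "k \<in> \<int>"
  shows "k *\<^sub>R v \<in> \<Lambda>"
proof -
  have n: "real n *\<^sub>R v \<in> \<Lambda>" for n :: nat
  proof (induction n)
    case 0 then show ?case using assms(1) by simp
  next
    case (Suc n)
    have "real (Suc n) *\<^sub>R v = v + real n *\<^sub>R v" by (simp add: algebra_simps)
    then show ?case using assms(2)[OF v Suc] by simp
  qed
  from k obtain i where i: "k = of_int i" by (auto elim: Ints_cases)
  show ?thesis
  proof (cases "i \<ge> 0")
    case True
    then have "k = real (nat i)" using i by simp
    then show ?thesis using n by simp
  next
    case False
    then have "k = - real (nat (- i))" using i by simp
    then show ?thesis using assms(3)[OF n[of "nat (-i)"]] by simp
  qed
qed

lemma grp_sum:
  fixes \<Lambda> :: "'a::real_vector set"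
  assumes "0 \<in> \<Lambda>" "\<And>a b. a\<in>\<Lambda> \<Longrightarrow> b\<in>\<Lambda> \<Longrightarrow> a + b \<in> \<Lambda>"
    and "finite I" "\<And>i. i \<in> I \<Longrightarrow> f i \<in> \<Lambda>"
  shows "sum f I \<in> \<Lambda>"
  using assms(3,4)
proof (induction I rule: finite_induct)
  case empty then show ?case using assms(1) by simp
next
  case (insert x F) then show ?case using assms(2) by simp
qed

lemma sep_finite:
  fixes \<Lambda> :: "'a::euclidean_space set"
  assumes diff: "\<And>a b. a\<in>\<Lambda> \<Longrightarrow> b\<in>\<Lambda> \<Longrightarrow> a - b \<in> \<Lambda>"
    and e: "e > 0" and sep: "\<And>y. y\<in>\<Lambda> \<Longrightarrow> y \<noteq> 0 \<Longrightarrow> e \<le> norm y"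
  shows "finite (\<Lambda> \<inter> cball 0 r)"
proof (rule ccontr)
  assume inf: "infinite (\<Lambda> \<inter> cball 0 r)"
  have "compact (cball (0::'a) r)" by simp
  then obtain x where x: "x islimpt (\<Lambda> \<inter> cball 0 r)"
    using inf unfolding compact_eq_Bolzano_Weierstrass by blast
  obtain y1 where y1: "y1 \<in> \<Lambda> \<inter> cball 0 r" "y1 \<noteq> x" "dist y1 x < e/2"
    using x e unfolding islimpt_approachable by (meson half_gt_zero)
  have "dist y1 x > 0" using y1 by simp
  then obtain y2 where y2: "y2 \<in> \<Lambda> \<inter> cball 0 r" "y2 \<noteq> x" "dist y2 x < dist y1 x"
    using x unfolding islimpt_approachable by blast
  have ne: "y1 - y2 \<noteq> 0" using y2 by auto
  have "norm (y1 - y2) \<le> dist y1 x + dist y2 x"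
    by (metis dist_norm dist_triangle2)
  also have "\<dots> < e" using y1 y2 by simp
  finally show False using sep[OF diff ne] y1 y2 by auto
qed

lemma sep_countable:
  fixes \<Lambda> :: "'a::euclidean_space set"
  assumes "\<And>r. finite (\<Lambda> \<inter> cball 0 r)"
  shows "countable \<Lambda>"
proof -
  have "\<Lambda> = (\<Union>n::nat. \<Lambda> \<inter> cball 0 (real n))"
  proof (safe)
    fix x assume "x \<in> \<Lambda>"
    obtain n :: nat where "norm x \<le> real n" using real_arch_simple by blast
    then show "x \<in> (\<Union>n::nat. \<Lambda> \<inter> cball 0 (real n))" using \<open>x \<in> \<Lambda>\<close> by auto
  qed
  also have "countable \<dots>" by (rule countable_UN) (auto intro: countable_finite assms)
  finally show ?thesis .
qed

lemma lat_basic: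
  assumes "is_lattice L"
  shows "0 \<in> L" "\<And>a b. a\<in>L \<Longrightarrow> b\<in>L \<Longrightarrow> a + b \<in> L" "\<And>a. a\<in>L \<Longrightarrow> -a \<in> L"
    "\<And>a b. a\<in>L \<Longrightarrow> b\<in>L \<Longrightarrow> a - b \<in> L" "span L = UNIV"
    "\<exists>e>0. \<forall>y\<in>L. y \<noteq> 0 \<longrightarrow> e \<le> norm y"
proof -
  show "0 \<in> L" "\<And>a b. a\<in>L \<Longrightarrow> b\<in>L \<Longrightarrow> a + b \<in> L" "\<And>a. a\<in>L \<Longrightarrow> -a \<in> L" "span L = UNIV"
    using assms unfolding is_lattice_def by auto
  then show "\<And>a b. a\<in>L \<Longrightarrow> b\<in>L \<Longrightarrow> a - b \<in> L" by (metis diff_conv_add_uminus)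
  from assms have "\<exists>e>0. \<forall>y\<in>L. dist y 0 < e \<longrightarrow> y = 0" using \<open>0 \<in> L\<close> unfolding is_lattice_def by blast
  then obtain e where "e > 0" "\<forall>y\<in>L. dist y 0 < e \<longrightarrow> y = 0" by blast
  then show "\<exists>e>0. \<forall>y\<in>L. y \<noteq> 0 \<longrightarrow> e \<le> norm y"
    by (intro exI[of _ e]) (auto simp: not_less[symmetric])
qed

lemma lattice_basis_map:
  fixes L :: "(real^'m) set"
  assumes "is_lattice L"
  obtains Bm Bi :: "real^'m \<Rightarrow> real^'m" where "linear Bm" "linear Bi" "\<And>x. Bi (Bm x) = x"
    "\<And>x. Bm (Bi x) = x" "\<And>b. b \<in> Basis \<Longrightarrow> Bm b \<in> L"
proof -
  obtain Bs where Bs: "Bs \<subseteq> L" "independent Bs" "L \<subseteq> span Bs"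
    by (rule maximal_independent_subset)
  have spB: "span Bs = UNIV"
    using lat_basic(5)[OF assms] span_mono[OF Bs(3)] by (auto simp: span_span)
  have finB: "finite Bs" using independent_bound[OF Bs(2)] by simp
  have cB: "card Bs = card (Basis :: (real^'m) set)"
    using basis_card_eq_dim[of Bs UNIV] Bs(2) spB by simp
  obtain g where g: "bij_betw g (Basis :: (real^'m) set) Bs"
    using finite_same_card_bij[OF finite_Basis finB cB[symmetric]] by blast
  obtain Bm where Bm: "linear Bm" "\<forall>x\<in>Basis. Bm x = g x" "range Bm = span (g ` Basis)"
    using linear_independent_extend_subspace[OF independent_Basis, of g] by blast
  have "g ` Basis = Bs" using g by (simp add: bij_betw_def)
  then have sj: "surj Bm" using Bm(3) spB by simp
  obtain Bi where Bi: "linear Bi" "\<forall>x. Bi (Bm x) = x" "\<forall>x. Bm (Bi x) = x"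
    using linear_surjective_isomorphism[OF Bm(1) sj] by auto
  show ?thesis
  proof (rule that[OF Bm(1) Bi(1)])
    show "\<And>x. Bi (Bm x) = x" "\<And>x. Bm (Bi x) = x" using Bi by auto
    fix b :: "real^'m" assume "b \<in> Basis"
    then show "Bm b \<in> L" using Bm(2) g Bs(1) by (auto simp: bij_betw_def)
  qed
qed

lemma int_abs_lt1:
  fixes k :: real
  assumes "k \<in> \<int>" "\<bar>k\<bar> < 1"
  shows "k = 0"
  using assms by (auto elim!: Ints_cases)

lemma lattice_fd:
  fixes L :: "(real^'m) set"
  assumes lat: "is_lattice L"
  obtains \<Gamma> P d where "\<Gamma> \<subseteq> L" "0 \<in> \<Gamma>" "\<And>a b. a\<in>\<Gamma> \<Longrightarrow> b\<in>\<Gamma> \<Longrightarrow> a+b\<in>\<Gamma>" "\<And>a. a\<in>\<Gamma> \<Longrightarrow> -a\<in>\<Gamma>"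
    "\<And>z. \<exists>!g. g\<in>\<Gamma> \<and> z - g \<in> P" "P \<in> sets borel" "P \<subseteq> cball 0 d" "0 \<in> P"
proof -
  obtain Bm Bi :: "real^'m \<Rightarrow> real^'m" where B: "linear Bm" "linear Bi" "\<And>x. Bi (Bm x) = x"
    "\<And>x. Bm (Bi x) = x" "\<And>b. b \<in> Basis \<Longrightarrow> Bm b \<in> L"
    using lattice_basis_map[OF lat] by blast
  define Zm :: "(real^'m) set" where "Zm = {x. \<forall>b\<in>Basis. x \<bullet> b \<in> \<int>}"
  define U :: "(real^'m) set" where "U = {x. \<forall>b\<in>Basis. 0 \<le> x \<bullet> b \<and> x \<bullet> b < 1}"
  define \<Gamma> where "\<Gamma> = {y. Bi y \<in> Zm}"
  define P where "P = {y. Bi y \<in> U}"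
  note lb = lat_basic[OF lat]
  have rep: "Bm x = (\<Sum>b\<in>Basis. (x \<bullet> b) *\<^sub>R Bm b)" for x
  proof -
    have "Bm x = Bm (\<Sum>b\<in>Basis. (x \<bullet> b) *\<^sub>R b)" by (simp add: euclidean_representation)
    also have "\<dots> = (\<Sum>b\<in>Basis. (x \<bullet> b) *\<^sub>R Bm b)"
      by (simp add: linear_sum[OF B(1)] linear_scale[OF B(1)])
    finally show ?thesis .
  qed
  have GL: "\<Gamma> \<subseteq> L"
  proof
    fix y assume "y \<in> \<Gamma>"
    then have z: "Bi y \<in> Zm" by (simp add: \<Gamma>_def)
    have "y = (\<Sum>b\<in>Basis. (Bi y \<bullet> b) *\<^sub>R Bm b)" using rep[of "Bi y"] B(4) by simp
    also have "\<dots> \<in> L"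
      by (rule grp_sum[OF lb(1) lb(2)]) (use z in \<open>auto simp: Zm_def intro!: grp_int_mult[OF lb(1) lb(2) lb(3)] B(5)\<close>)
    finally show "y \<in> L" .
  qed
  have G0: "0 \<in> \<Gamma>" by (simp add: \<Gamma>_def Zm_def linear_0[OF B(2)])
  have Gadd: "a + b \<in> \<Gamma>" if "a \<in> \<Gamma>" "b \<in> \<Gamma>" for a b
    using that by (auto simp: \<Gamma>_def Zm_def linear_add[OF B(2)] inner_add_left)
  have Gneg: "- a \<in> \<Gamma>" if "a \<in> \<Gamma>" for a
    using that by (auto simp: \<Gamma>_def Zm_def linear_neg[OF B(2)])
  have fd: "\<exists>!g. g\<in>\<Gamma> \<and> z - g \<in> P" for z
  proof -
    define x where "x = Bi z"
    define w :: "real^'m" where "w = (\<Sum>b\<in>Basis. of_int \<lfloor>x \<bullet> b\<rfloor> *\<^sub>R b)"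
    have wb: "w \<bullet> b = of_int \<lfloor>x \<bullet> b\<rfloor>" if "b \<in> Basis" for b
      using that unfolding w_def by (simp add: inner_sum_left inner_Basis if_distrib sum.delta cong: if_cong)
    show ?thesis
    proof (rule ex_ex1I)
      show "\<exists>g. g \<in> \<Gamma> \<and> z - g \<in> P"
      proof (intro exI conjI)
        show "Bm w \<in> \<Gamma>" using wb by (simp add: \<Gamma>_def Zm_def B(3))
        have "Bi (z - Bm w) = x - w" by (simp add: linear_diff[OF B(2)] B(3) x_def)
        moreover have "\<forall>b\<in>Basis. 0 \<le> (x - w) \<bullet> b \<and> (x - w) \<bullet> b < 1"
        proof
          fix b :: "real^'m" assume b: "b \<in> Basis"
          show "0 \<le> (x - w) \<bullet> b \<and> (x - w) \<bullet> b < 1"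
            unfolding inner_diff_left wb[OF b]
            using of_int_floor_le[of "x \<bullet> b"] real_of_int_floor_add_one_gt[of "x \<bullet> b"]
            by linarith
        qed
        ultimately show "z - Bm w \<in> P" by (simp add: P_def U_def)
      qed
      fix g1 g2 assume g1: "g1 \<in> \<Gamma> \<and> z - g1 \<in> P" and g2: "g2 \<in> \<Gamma> \<and> z - g2 \<in> P"
      have "Bi g1 = Bi g2"
      proof (rule euclidean_eqI)
        fix b :: "real^'m" assume b: "b \<in> Basis"
        have i1: "Bi g1 \<bullet> b \<in> \<int>" "Bi g2 \<bullet> b \<in> \<int>" using g1 g2 b by (auto simp: \<Gamma>_def Zm_def)
        have u1: "0 \<le> (x - Bi g1) \<bullet> b" "(x - Bi g1) \<bullet> b < 1"
          using g1 b by (auto simp: P_def U_def x_def linear_diff[OF B(2)])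
        have u2: "0 \<le> (x - Bi g2) \<bullet> b" "(x - Bi g2) \<bullet> b < 1"
          using g2 b by (auto simp: P_def U_def x_def linear_diff[OF B(2)])
        have "Bi g1 \<bullet> b - Bi g2 \<bullet> b \<in> \<int>" using i1 by (rule Ints_diff)
        moreover have "\<bar>Bi g1 \<bullet> b - Bi g2 \<bullet> b\<bar> < 1" using u1 u2 by (simp add: inner_diff_left)
        ultimately have "Bi g1 \<bullet> b - Bi g2 \<bullet> b = 0" by (rule int_abs_lt1)
        then show "Bi g1 \<bullet> b = Bi g2 \<bullet> b" by simp
      qed
      then show "g1 = g2" by (metis B(4))
    qed
  qed
  have Bic: "continuous_on UNIV Bi" by (simp add: linear_continuous_on linear_linear B(2))
  have Bim: "Bi \<in> borel_measurable borel" by (rule borel_measurable_continuous_onI[OF Bic])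
  have Um: "U \<in> sets borel"
  proof -
    have "U = (\<Inter>b\<in>Basis. {x. 0 \<le> x \<bullet> b \<and> x \<bullet> b < 1})" by (auto simp: U_def)
    also have "\<dots> \<in> sets borel"
    proof (rule sets.finite_INT)
      fix b :: "real^'m"
      have "{x::real^'m. 0 \<le> x \<bullet> b \<and> x \<bullet> b < 1} = (\<lambda>x. x \<bullet> b) -` {0..<1} \<inter> space borel" by auto
      also have "\<dots> \<in> sets borel" by (rule measurable_sets[of _ _ borel]) auto
      finally show "{x::real^'m. 0 \<le> x \<bullet> b \<and> x \<bullet> b < 1} \<in> sets borel" .
    qed auto
    finally show ?thesis .
  qed
  have Pm: "P \<in> sets borel"
  proof -
    have "P = Bi -` U \<inter> space borel" by (auto simp: P_def)
    also have "\<dots> \<in> sets borel" by (rule measurable_sets[OF Bim Um])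
    finally show ?thesis .
  qed
  obtain K where K: "K > 0" "\<And>x. norm (Bm x) \<le> K * norm x"
    using linear_bounded_pos[OF B(1)] by metis
  have Pd: "P \<subseteq> cball 0 (real CARD('m) * K)"
  proof
    fix y assume "y \<in> P"
    then have u: "Bi y \<in> U" by (simp add: P_def)
    have "norm (Bi y) \<le> (\<Sum>b\<in>Basis. \<bar>Bi y \<bullet> b\<bar>)" by (rule norm_le_l1)
    also have "\<dots> \<le> (\<Sum>b\<in>(Basis::(real^'m) set). 1)"
      by (rule sum_mono) (use u in \<open>auto simp: U_def\<close>)
    also have "\<dots> = real CARD('m)" by simp
    finally have "norm (Bi y) \<le> real CARD('m)" .
    have "norm (Bm (Bi y)) \<le> K * norm (Bi y)" by (rule K(2))
    also have "\<dots> \<le> K * real CARD('m)"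
      by (rule mult_left_mono) (use K \<open>norm (Bi y) \<le> real CARD('m)\<close> in auto)
    finally have "norm (Bm (Bi y)) \<le> real CARD('m) * K" by (simp add: mult.commute)
    then show "y \<in> cball 0 (real CARD('m) * K)" by (simp add: B(4))
  qed
  have P0: "0 \<in> P" by (simp add: P_def U_def linear_0[OF B(2)])
  show ?thesis by (rule that[OF GL G0 Gadd Gneg fd Pm Pd P0])
qed

lemma lat_min:
  fixes L :: "(real^'m) set"
  assumes lat: "is_lattice L"
  obtains u where "u \<in> L" "u \<noteq> 0" "min_norm L = norm u"
proof -
  note lb = lat_basic[OF lat]
  obtain e where e: "e>0" "\<forall>y\<in>L. y\<noteq>0 \<longrightarrow> e \<le> norm y" using lb(6) by blast
  have finL: "finite (L \<inter> cball 0 r)" for r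
    by (rule sep_finite[of L e]) (use lb(4) e in auto)
  have "\<exists>x0\<in>L. x0 \<noteq> 0"
  proof (rule ccontr)
    assume "\<not> (\<exists>x0\<in>L. x0 \<noteq> 0)"
    then have "L \<subseteq> {0}" by auto
    then have "span L \<subseteq> span {0}" by (rule span_mono)
    then have "(UNIV :: (real^'m) set) \<subseteq> {0}" using lb(5) by simp
    moreover have "axis undefined (1::real) \<noteq> (0 :: real^'m)" by (simp add: axis_eq_0_iff)
    ultimately show False by auto
  qed
  then obtain x0 where x0: "x0 \<in> L" "x0 \<noteq> 0" by blast
  define S where "S = (L \<inter> cball 0 (norm x0)) - {0}"
  have fS: "finite S" using finL by (simp add: S_def)
  have neS: "x0 \<in> S" using x0 by (simp add: S_def)
  define mm where "mm = Min (norm ` S)"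
  have "mm \<in> norm ` S" unfolding mm_def using fS neS by (intro Min_in) auto
  then obtain u where u: "u \<in> S" "norm u = mm" by auto
  have umin: "norm u \<le> norm x" if "x \<in> L" "x \<noteq> 0" for x
  proof (cases "norm x \<le> norm x0")
    case True
    then have "x \<in> S" using that by (simp add: S_def)
    then show ?thesis using u fS unfolding mm_def by (simp add: Min_le)
  next
    case False
    have "norm u \<le> norm x0" using u by (simp add: S_def)
    then show ?thesis using False by simp
  qed
  have "min_norm L = norm u"
    unfolding min_norm_def
    by (rule cInf_eq_minimum) (use u umin in \<open>auto simp: S_def\<close>)
  then show ?thesis using that u by (auto simp: S_def)
qed

lemma coset_sub:
  fixes L :: "'a::ab_group_add set"
  assumes diff: "\<And>a b. a\<in>L \<Longrightarrow> b\<in>L \<Longrightarrow> a - b \<in> L" and add: "\<And>a b. a\<in>L \<Longrightarrow> b\<in>L \<Longrightarrow> a + b \<in> L"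
    and l1: "l1 \<in> L" and l2: "l2 \<in> L" and eq: "x1 + l1 = x2 + l2"
  shows "(+) x1 ` L \<subseteq> (+) x2 ` L"
proof
  fix y assume "y \<in> (+) x1 ` L"
  then obtain l where l: "l \<in> L" "y = x1 + l" by auto
  have "x1 = x2 + (l2 - l1)" using eq by (simp add: algebra_simps)
  then have "y = x2 + ((l2 - l1) + l)" using l by (simp add: algebra_simps)
  moreover have "(l2 - l1) + l \<in> L" using add[OF diff[OF l2 l1] l(1)] .
  ultimately show "y \<in> (+) x2 ` L" by blast
qed

lemma partition_count:
  fixes L TL P :: "'a::ab_group_add set"
  assumes LT: "L \<subseteq> TL" and L0: "0 \<in> L"
    and diff: "\<And>a b. a\<in>L \<Longrightarrow> b\<in>L \<Longrightarrow> a - b \<in> L" and add: "\<And>a b. a\<in>L \<Longrightarrow> b\<in>L \<Longrightarrow> a + b \<in> L"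
    and Tadd: "\<And>a b. a\<in>TL \<Longrightarrow> b\<in>TL \<Longrightarrow> a + b \<in> TL"
    and fin: "finite (TL \<inter> P)"
    and blk: "\<And>x. x \<in> TL \<Longrightarrow> card (((+) x ` L) \<inter> P) = k" and k: "k \<ge> 1"
  shows "finite ((\<lambda>x. (+) x ` L) ` TL) \<and> card (TL \<inter> P) = card ((\<lambda>x. (+) x ` L) ` TL) * k"
proof -
  define C where "C = (\<lambda>x. (+) x ` L) ` TL"
  have disj: "c1 = c2" if h: "c1 \<in> C" "c2 \<in> C" "z \<in> c1" "z \<in> c2" for c1 c2 z
  proof -
    obtain x1 where x1: "x1 \<in> TL" "c1 = (+) x1 ` L" using h(1) by (auto simp: C_def)
    obtain x2 where x2: "x2 \<in> TL" "c2 = (+) x2 ` L" using h(2) by (auto simp: C_def)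
    obtain l1 where l1: "l1 \<in> L" "z = x1 + l1" using h(3) x1 by auto
    obtain l2 where l2: "l2 \<in> L" "z = x2 + l2" using h(4) x2 by auto
    have e12: "x1 + l1 = x2 + l2" using l1(2) l2(2) by simp
    have "(+) x1 ` L \<subseteq> (+) x2 ` L" by (rule coset_sub[OF diff add l1(1) l2(1) e12])
    moreover have "(+) x2 ` L \<subseteq> (+) x1 ` L" by (rule coset_sub[OF diff add l2(1) l1(1) e12[symmetric]])
    ultimately show ?thesis using x1 x2 by auto
  qed
  have cardc: "card (c \<inter> P) = k" if "c \<in> C" for c using that blk by (auto simp: C_def)
  have ne: "c \<inter> P \<noteq> {}" if "c \<in> C" for c using cardc[OF that] k by auto
  define C' where "C' = (\<lambda>c. c \<inter> P) ` C"
  have sub: "c \<subseteq> TL" if "c \<in> C" for c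
  proof
    fix y assume "y \<in> c"
    moreover note \<open>c \<in> C\<close>
    ultimately obtain x l where "x \<in> TL" "l \<in> L" "y = x + l" by (auto simp: C_def)
    then show "y \<in> TL" using Tadd LT by auto
  qed
  have U: "\<Union>C' = TL \<inter> P"
  proof
    show "\<Union>C' \<subseteq> TL \<inter> P" using sub by (auto simp: C'_def)
    show "TL \<inter> P \<subseteq> \<Union>C'"
    proof
      fix y assume y: "y \<in> TL \<inter> P"
      have "y \<in> (+) y ` L" using L0 by force
      then show "y \<in> \<Union>C'" using y unfolding C'_def C_def by blast
    qed
  qed
  have finC': "finite C'"
    by (rule finite_subset[of _ "Pow (TL \<inter> P)"]) (use sub fin in \<open>auto simp: C'_def simp del: Pow_Int_eq\<close>)
  have inj: "inj_on (\<lambda>c. c \<inter> P) C"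
  proof (rule inj_onI)
    fix c1 c2 assume c: "c1 \<in> C" "c2 \<in> C" "c1 \<inter> P = c2 \<inter> P"
    obtain z where "z \<in> c1 \<inter> P" using ne[OF c(1)] by blast
    then show "c1 = c2" using disj[OF c(1) c(2)] c(3) by blast
  qed
  have finC: "finite C" using finC' inj by (simp add: C'_def finite_image_iff)
  have "k * card C' = card (\<Union>C')"
  proof (rule card_partition[OF finC'])
    show "finite (\<Union>C')" using U fin by simp
    show "\<And>c. c \<in> C' \<Longrightarrow> card c = k" using cardc by (auto simp: C'_def)
    show "\<And>c1 c2. c1 \<in> C' \<Longrightarrow> c2 \<in> C' \<Longrightarrow> c1 \<noteq> c2 \<Longrightarrow> c1 \<inter> c2 = {}"
      using disj unfolding C'_def by blast
  qed
  moreover have "card C' = card C" unfolding C'_def by (rule card_image[OF inj])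
  ultimately show ?thesis using finC U by (simp add: C_def mult.commute)
qed

lemma limit_ineq:
  fixes n c d :: real and m :: nat
  assumes c: "c > 0"
    and A: "\<And>R. R > 0 \<Longrightarrow> n * R^m \<le> ((R+d)/c+d)^m"
    and B: "\<And>R. R > 0 \<Longrightarrow> R^m \<le> n * (c*(R+d)+d)^m"
  shows "n = (1/c)^m"
proof -
  have l1: "((\<lambda>R. (((R+d)/c+d)/R)^m) \<longlongrightarrow> (1/c)^m) at_top"
  proof -
    have "((\<lambda>R. 1/c + (d/c+d) * inverse R) \<longlongrightarrow> 1/c + (d/c+d) * 0) at_top"
      by (intro tendsto_intros tendsto_inverse_0_at_top filterlim_ident)
    then have "((\<lambda>R. 1/c + (d/c+d) * inverse R) \<longlongrightarrow> 1/c) at_top" by simp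
    moreover have "eventually (\<lambda>R. 1/c + (d/c+d) * inverse R = ((R+d)/c+d)/R) at_top"
      using eventually_gt_at_top[of 0] by eventually_elim (use c in \<open>simp add: field_simps\<close>)
    ultimately have "((\<lambda>R. ((R+d)/c+d)/R) \<longlongrightarrow> 1/c) at_top" by (rule Lim_transform_eventually)
    then show ?thesis by (rule tendsto_power)
  qed
  have l2: "((\<lambda>R. n * ((c*(R+d)+d)/R)^m) \<longlongrightarrow> n * c^m) at_top"
  proof -
    have "((\<lambda>R. c + (c*d+d) * inverse R) \<longlongrightarrow> c + (c*d+d) * 0) at_top"
      by (intro tendsto_intros tendsto_inverse_0_at_top filterlim_ident)
    then have "((\<lambda>R. c + (c*d+d) * inverse R) \<longlongrightarrow> c) at_top" by simp
    moreover have "eventually (\<lambda>R. c + (c*d+d) * inverse R = (c*(R+d)+d)/R) at_top"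
      using eventually_gt_at_top[of 0] by eventually_elim (use c in \<open>simp add: field_simps\<close>)
    ultimately have "((\<lambda>R. (c*(R+d)+d)/R) \<longlongrightarrow> c) at_top" by (rule Lim_transform_eventually)
    then show ?thesis by (intro tendsto_mult tendsto_const tendsto_power)
  qed
  have e1: "eventually (\<lambda>R. n \<le> (((R+d)/c+d)/R)^m) at_top"
    using eventually_gt_at_top[of 0]
  proof eventually_elim
    case (elim R)
    have "n * R^m \<le> ((R+d)/c+d)^m" using A[OF elim] .
    then have "n \<le> ((R+d)/c+d)^m / R^m" using elim by (simp add: field_simps)
    then show ?case by (simp add: power_divide)
  qed
  have e2: "eventually (\<lambda>R. 1 \<le> n * ((c*(R+d)+d)/R)^m) at_top"
    using eventually_gt_at_top[of 0]
  proof eventually_elim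
    case (elim R)
    have "R^m \<le> n * (c*(R+d)+d)^m" using B[OF elim] .
    then have "1 \<le> n * (c*(R+d)+d)^m / R^m" using elim by (simp add: field_simps)
    then show ?case by (simp add: power_divide)
  qed
  have le1: "n \<le> (1/c)^m" by (rule tendsto_le[OF trivial_limit_at_top_linorder l1 tendsto_const e1])
  have le2: "1 \<le> n * c^m" by (rule tendsto_le[OF trivial_limit_at_top_linorder l2 tendsto_const e2])
  have cm: "c^m > 0" using c by simp
  from le2 have "1 / c^m \<le> n" using cm by (simp add: field_simps)
  then show ?thesis using le1 by (simp add: power_one_over)
qed

theorem lemma4p7:
  fixes L :: "(real^'m) set" and C :: "(real^'m) set set"
  assumes "is_lattice L"
    and "is_lattice_code L C"
  shows "real (card C) \<in> N_set L"
proof -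
  note lat = assms(1)
  note lb = lat_basic[OF lat]
  obtain e where e: "e>0" "\<forall>y\<in>L. y\<noteq>0 \<longrightarrow> e \<le> norm y" using lb(6) by blast
  obtain T where T: "T \<in> CO" "L \<subseteq> T ` L" "C = quotient_set (T ` L) L"
    using assms(2) unfolding is_lattice_code_def by blast
  obtain c Q where cQ: "c > 0" "orthogonal_transformation Q" "T = (\<lambda>x. c *\<^sub>R Q x)"
    using T(1) unfolding CO_def by blast
  have linQ: "linear Q" by (rule orthogonal_transformation_linear[OF cQ(2)])
  have nT: "norm (T x) = c * norm x" for x
    using cQ by (simp add: orthogonal_transformation_norm)
  have Tdiff: "T a - T b = T (a - b)" for a b
    by (simp add: cQ(3) linear_diff[OF linQ] scaleR_diff_right)
  have T0: "T 0 = 0" by (simp add: cQ(3) linear_0[OF linQ])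
  have Tinj: "inj T"
  proof (rule injI)
    fix x y assume "T x = T y"
    then have "norm (T (x - y)) = 0" by (simp add: Tdiff[symmetric])
    then show "x = y" using nT[of "x - y"] cQ(1) by simp
  qed
  define TL where "TL = T ` L"
  have TLdiff: "a - b \<in> TL" if "a \<in> TL" "b \<in> TL" for a b
    using that lb(4) by (auto simp: TL_def Tdiff)
  have TL0: "0 \<in> TL" using lb(1) T0 unfolding TL_def by force
  have TLneg: "- a \<in> TL" if "a \<in> TL" for a using TLdiff[OF TL0 that] by simp
  have TLadd: "a + b \<in> TL" if "a \<in> TL" "b \<in> TL" for a b
    using TLdiff[OF that(1) TLneg[OF that(2)]] by simp
  have TLsep: "c * e \<le> norm y" if h: "y \<in> TL" "y \<noteq> 0" for y
  proof -
    obtain x where x: "x \<in> L" "y = T x" using h(1) by (auto simp: TL_def)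
    have "x \<noteq> 0" using x h(2) T0 by auto
    then have "e \<le> norm x" using e x by auto
    then show ?thesis using x nT cQ(1) by simp
  qed
  have finL: "finite (L \<inter> cball 0 r)" for r
    by (rule sep_finite[of L e]) (use lb(4) e in auto)
  have finTL: "finite (TL \<inter> cball 0 r)" for r
    by (rule sep_finite[of TL "c * e"]) (use TLdiff TLsep e cQ(1) in auto)
  have cntL: "countable L" by (rule sep_countable[OF finL])
  have cntTL: "countable TL" by (rule sep_countable[OF finTL])
  have LTL: "L \<subseteq> TL" using T(2) by (simp add: TL_def)
  have cardball: "card (TL \<inter> cball 0 r) = card (L \<inter> cball 0 (r / c))" for r
  proof -
    have "TL \<inter> cball 0 r = T ` (L \<inter> cball 0 (r / c))"
      using cQ(1) by (auto simp: TL_def nT field_simps)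
    moreover have "inj_on T (L \<inter> cball 0 (r / c))" using Tinj by (simp add: inj_on_def inj_def)
    ultimately show ?thesis by (simp add: card_image)
  qed
  obtain \<Gamma> P d where G: "\<Gamma> \<subseteq> L" "0 \<in> \<Gamma>" "\<And>a b. a\<in>\<Gamma> \<Longrightarrow> b\<in>\<Gamma> \<Longrightarrow> a+b\<in>\<Gamma>" "\<And>a. a\<in>\<Gamma> \<Longrightarrow> -a\<in>\<Gamma>"
    "\<And>z. \<exists>!g. g\<in>\<Gamma> \<and> z - g \<in> P" "P \<in> sets borel" "P \<subseteq> cball 0 d" "0 \<in> P"
    by (rule lattice_fd[OF lat]) (rule that; assumption)
  have d0: "d \<ge> 0" using G(7,8) by auto
  have GTL: "\<Gamma> \<subseteq> TL" using G(1) LTL by auto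
  have finLP: "finite (L \<inter> P)" by (rule finite_subset[OF _ finL[of d]]) (use G(7) in auto)
  have finTLP: "finite (TL \<inter> P)" by (rule finite_subset[OF _ finTL[of d]]) (use G(7) in auto)
  define k where "k = card (L \<inter> P)"
  have k1: "k \<ge> 1" unfolding k_def using finLP lb(1) G(8)
    by (metis IntI card_0_eq empty_iff less_one not_le)
  have blk: "card (((+) x ` L) \<inter> P) = k" if "x \<in> TL" for x
  proof -
    have "((+) x ` L) \<inter> P = (+) x ` {l\<in>L. l - (- x) \<in> P}" by (auto simp: add.commute)
    then have "card (((+) x ` L) \<inter> P) = card {l\<in>L. l - (- x) \<in> P}"
      by (simp add: card_image)
    also have "\<dots> = k" unfolding k_def
      using fd_card[OF lb(4) G(1-5) finLP, of "- x"] by simp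
    finally show ?thesis .
  qed
  have part: "finite ((\<lambda>x. (+) x ` L) ` TL) \<and> card (TL \<inter> P) = card ((\<lambda>x. (+) x ` L) ` TL) * k"
    by (rule partition_count[OF LTL lb(1) lb(4) lb(2) TLadd finTLP blk k1])
  have CC: "C = (\<lambda>x. (+) x ` L) ` TL" by (simp add: T(3) quotient_set_def TL_def)
  define n where "n = card C"
  have cardTLP: "card (TL \<inter> P) = n * k" using part CC n_def by simp
  define W where "W = (\<lambda>R. measure lborel (cball (0::real^'m) R))"
  define vP where "vP = measure lborel P"
  note SL = fd_sandwich[OF lb(4) G(1-5) finLP cntL G(6) G(7) finL]
  note STL = fd_sandwich[OF TLdiff GTL G(2-5) finTLP cntTL G(6) G(7) finTL]
  have I1: "real n * W R \<le> W ((R+d)/c + d)" for R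
  proof -
    have "real k * (real n * W R) = real (card (TL \<inter> P)) * W R" by (simp add: cardTLP W_def)
    also have "\<dots> \<le> real (card (TL \<inter> cball 0 (R + d))) * vP" unfolding W_def vP_def by (rule STL(2))
    also have "\<dots> = real (card (L \<inter> cball 0 ((R+d)/c + d - d))) * vP" by (simp add: cardball)
    also have "\<dots> \<le> real k * W ((R+d)/c + d)" unfolding W_def vP_def k_def by (rule SL(1))
    finally show ?thesis using k1 by simp
  qed
  have I2: "W R \<le> real n * W (c*(R+d) + d)" for R
  proof -
    have "real k * W R \<le> real (card (L \<inter> cball 0 (R + d))) * vP" unfolding W_def vP_def k_def by (rule SL(2))
    also have "\<dots> = real (card (TL \<inter> cball 0 (c*(R+d) + d - d))) * vP" using cQ(1) by (simp add: cardball)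
    also have "\<dots> \<le> real (card (TL \<inter> P)) * W (c*(R+d) + d)" unfolding W_def vP_def by (rule STL(1))
    also have "\<dots> = real k * (real n * W (c*(R+d) + d))" by (simp add: cardTLP)
    finally show ?thesis using k1 by simp
  qed
  define \<omega> where "\<omega> = unit_ball_vol (real CARD('m))"
  have om: "\<omega> > 0" unfolding \<omega>_def by simp
  have Wf: "W R = \<omega> * R ^ CARD('m)" if "R \<ge> 0" for R
    using that unfolding W_def \<omega>_def by (simp add: content_cball)
  have nval: "real n = (1/c) ^ CARD('m)"
  proof (rule limit_ineq[OF cQ(1)])
    fix R :: real assume R: "R > 0"
    have "\<omega> * (real n * R ^ CARD('m)) \<le> \<omega> * ((R+d)/c + d) ^ CARD('m)"
      using I1[of R] R d0 cQ(1) by (simp add: Wf mult.assoc mult.left_commute)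
    then show "real n * R ^ CARD('m) \<le> ((R+d)/c + d) ^ CARD('m)" using om by simp
    have "\<omega> * R ^ CARD('m) \<le> \<omega> * (real n * (c*(R+d) + d) ^ CARD('m))"
      using I2[of R] R d0 cQ(1) by (simp add: Wf mult.assoc mult.left_commute)
    then show "R ^ CARD('m) \<le> real n * (c*(R+d) + d) ^ CARD('m)" using om by simp
  qed
  obtain u where u: "u \<in> L" "u \<noteq> 0" "min_norm L = norm u" by (rule lat_min[OF lat])
  obtain v where v: "v \<in> L" "u = T v" using u(1) T(2) by auto
  have v0: "v \<noteq> 0" using v u(2) T0 by auto
  have nu: "norm u > 0" using u(2) by simp
  define z where "z = inverse (min_norm L) *\<^sub>R v"
  have zN: "z \<in> normalized_lattice L" unfolding z_def normalized_lattice_def using v(1) by blast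
  have im: "inverse (min_norm L) \<noteq> 0" using u(3) nu by simp
  have z0: "z \<noteq> 0" unfolding z_def using im v0 by simp
  have nz: "norm z = 1 / c"
    unfolding z_def using u(3) v(2) nT[of v] nu cQ(1) v0 by (simp add: field_simps)
  have "real (card C) = norm z ^ CARD('m)" using nval nz n_def by simp
  then show ?thesis unfolding N_set_def using zN z0 by blast
qed

end
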